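(* Let $m\ge1$ be an integer and $\mathcal S'=\{x_0,x_1,x_2,\ldots,x_m\}$, with corresponding restricted right-arm rotation distance $d_{RRA}^{\mathcal S'}$ (rotations allowed at all right-arm nodes at levels $0,1,\ldots,m$). Then for every integer $n>m+4$ there exist finite rooted binary trees $T_1,T_2$, each with $n$ nodes, such that $d_{RRA}^{\mathcal S'}(T_1,T_2)$ is defined and $d_{RRA}^{\mathcal S'}(T_1,T_2)\ge 4n-4m-4$.
   Context: Trees: finite rooted binary trees, each internal vertex (node) having a left and a right child. The right arm consists of the root and all nodes reachable from the root by a path of right edges; the level of a node is its distance from the root. Right rotation at a node $N$ whose left child $M$ is a node (with $A,B$ the subtrees of $M$, $C$ the right subtree of $N$) replaces the subtree at $N$ by one whose root has left subtree $A$ and right child a node with left subtree $B$ and right subtree $C$; left rotation at $N$ is the inverse. Rotations preserve the number of nodes. $d_{RRA}^{\mathcal S'}(T_1,T_2)$ is the minimal number of rotations, each at a right-arm node at one of the levels $0,1,\ldots,m$, required to transform $T_1$ into $T_2$; it is defined when such a sequence exists. *)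

theory Defs
  imports Main
begin

datatype tree = Leaf | Node tree tree

fun nodes :: "tree \<Rightarrow> nat" where
  "nodes Leaf = 0"
| "nodes (Node l r) = Suc (nodes l + nodes r)"

fun rot_right :: "tree \<Rightarrow> tree option" where
  "rot_right (Node (Node A B) C) = Some (Node A (Node B C))"
| "rot_right _ = None"

fun rot_left :: "tree \<Rightarrow> tree option" where
  "rot_left (Node A (Node B C)) = Some (Node (Node A B) C)"
| "rot_left _ = None"

fun at_arm :: "nat \<Rightarrow> (tree \<Rightarrow> tree option) \<Rightarrow> tree \<Rightarrow> tree option" where
  "at_arm 0 f t = f t"
| "at_arm (Suc k) f Leaf = None"
| "at_arm (Suc k) f (Node l r) = map_option (Node l) (at_arm k f r)"

definition rra_step :: "nat \<Rightarrow> tree \<Rightarrow> tree \<Rightarrow> bool" where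
  "rra_step m t t' \<longleftrightarrow> (\<exists>k\<le>m. at_arm k rot_right t = Some t' \<or> at_arm k rot_left t = Some t')"

definition rra_defined :: "nat \<Rightarrow> tree \<Rightarrow> tree \<Rightarrow> bool" where
  "rra_defined m t1 t2 \<longleftrightarrow> (\<exists>j. (rra_step m ^^ j) t1 t2)"

definition rra_dist :: "nat \<Rightarrow> tree \<Rightarrow> tree \<Rightarrow> nat" where
  "rra_dist m t1 t2 = (LEAST j. (rra_step m ^^ j) t1 t2)"

end

theory Submission
  imports Defs
begin

fun onarm :: "tree \<Rightarrow> nat \<Rightarrow> bool" where
  "onarm Leaf i = False"
| "onarm (Node l r) i = (i = nodes l \<or> (nodes l < i \<and> onarm r (i - Suc (nodes l))))"

fun sub :: "tree \<Rightarrow> nat \<Rightarrow> tree" where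
  "sub Leaf i = Leaf"
| "sub (Node l r) i = (if i < nodes l then sub l i else if i = nodes l then Node l r
     else sub r (i - Suc (nodes l)))"

fun armcnt :: "tree \<Rightarrow> nat \<Rightarrow> nat" where
  "armcnt Leaf i = 0"
| "armcnt (Node l r) i = (if i \<le> nodes l then 0 else Suc (armcnt r (i - Suc (nodes l))))"

lemma armcnt_card: "armcnt t i = card {y. y < i \<and> onarm t y}"
proof (induction t arbitrary: i)
  case Leaf
  then show ?case by simp
next
  case (Node l r)
  show ?case
  proof (cases "i \<le> nodes l")
    case True
    then have "{y. y < i \<and> onarm (Node l r) y} = {}" by auto
    then show ?thesis using True by simp
  next
    case False
    let ?S = "{y. y < i - Suc (nodes l) \<and> onarm r y}"
    have eq: "{y. y < i \<and> onarm (Node l r) y} = insert (nodes l) ((\<lambda>y. y + Suc (nodes l)) ` ?S)"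
    proof (rule set_eqI)
      fix y
      show "y \<in> {y. y < i \<and> onarm (Node l r) y} \<longleftrightarrow> y \<in> insert (nodes l) ((\<lambda>y. y + Suc (nodes l)) ` ?S)"
      proof
        assume "y \<in> {y. y < i \<and> onarm (Node l r) y}"
        then show "y \<in> insert (nodes l) ((\<lambda>y. y + Suc (nodes l)) ` ?S)"
          using False by (auto intro!: image_eqI[where x="y - Suc (nodes l)"])
      next
        assume "y \<in> insert (nodes l) ((\<lambda>y. y + Suc (nodes l)) ` ?S)"
        then show "y \<in> {y. y < i \<and> onarm (Node l r) y}" using False by auto
      qed
    qed
    have fin: "finite ?S" by simp
    have "card (insert (nodes l) ((\<lambda>y. y + Suc (nodes l)) ` ?S)) = Suc (card ?S)"
      using fin by (subst card_insert_disjoint) (auto simp: card_image inj_on_def)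
    then show ?thesis using eq False Node.IH by simp
  qed
qed

lemma onarm_lt: "onarm t i \<Longrightarrow> i < nodes t"
proof (induction t arbitrary: i)
  case Leaf
  then show ?case by simp
next
  case (Node l r)
  show ?case
  proof (cases "i = nodes l")
    case True
    then show ?thesis by simp
  next
    case False
    then have a: "onarm r (i - Suc (nodes l))" "nodes l < i" using Node.prems by auto
    then have "i - Suc (nodes l) < nodes r" using Node.IH(2) by blast
    then show ?thesis using a(2) by simp
  qed
qed

lemma sub_node: "i < nodes t \<Longrightarrow> \<exists>l r. sub t i = Node l r"
  by (induction t arbitrary: i) auto

lemma sub_range: "i < nodes t \<Longrightarrow> sub t i = Node l r \<Longrightarrow> i + nodes r < nodes t"
proof (induction t arbitrary: i)
  case Leaf
  then show ?case by simp
next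
  case (Node L R)
  show ?case
  proof (cases "i < nodes L")
    case True
    then show ?thesis using Node.prems Node.IH(1)[of i] by auto
  next
    case False
    show ?thesis
    proof (cases "i = nodes L")
      case True
      then show ?thesis using Node.prems by auto
    next
      case False2: False
      have a: "i - Suc (nodes L) < nodes R" "sub R (i - Suc (nodes L)) = Node l r"
        using False False2 Node.prems by auto
      have "i - Suc (nodes L) + nodes r < nodes R" using Node.IH(2)[OF a] .
      then show ?thesis using False False2 by simp
    qed
  qed
qed

lemma desc_nonarm: "\<not> onarm t x \<Longrightarrow> x < nodes t \<Longrightarrow> sub t x = Node l r \<Longrightarrow> x < y \<Longrightarrow> y \<le> x + nodes r \<Longrightarrow> \<not> onarm t y"
proof (induction t arbitrary: x y)
  case Leaf
  then show ?case by simp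
next
  case (Node L R)
  show ?case
  proof (cases "x < nodes L")
    case True
    then have "x + nodes r < nodes L" using Node.prems sub_range[of x L l r] by simp
    then show ?thesis using Node.prems by auto
  next
    case False
    then have "x > nodes L" using Node.prems by (cases "x = nodes L") auto
    then show ?thesis using Node.prems Node.IH(2)[of "x - Suc (nodes L)" "y - Suc (nodes L)"] by auto
  qed
qed

definition good_step :: "nat \<Rightarrow> tree \<Rightarrow> tree \<Rightarrow> bool" where
  "good_step k t t' \<longleftrightarrow> nodes t' = nodes t \<and>
     (\<exists>c<nodes t. (\<forall>i. (onarm t i \<noteq> onarm t' i) = (i = c)) \<and> armcnt t c \<le> k \<and> armcnt t' c \<le> k
        \<and> (onarm t c \<longrightarrow> (\<forall>l r. sub t' c = Node l r \<longrightarrow> onarm t' (c + nodes r + 1)))) \<and>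
     (\<forall>i. \<not> onarm t i \<longrightarrow> \<not> onarm t' i \<longrightarrow> sub t' i = sub t i)"

lemma good_rr: "rot_right t = Some t' \<Longrightarrow> good_step 0 t t'"
proof -
  assume h: "rot_right t = Some t'"
  then obtain A B C where t: "t = Node (Node A B) C" and t': "t' = Node A (Node B C)"
    by (cases t rule: rot_right.cases) auto
  show ?thesis unfolding good_step_def t t'
  proof (intro conjI)
    show "nodes (Node A (Node B C)) = nodes (Node (Node A B) C)" by simp
    show "\<exists>c<nodes (Node (Node A B) C).
       (\<forall>i. (onarm (Node (Node A B) C) i \<noteq> onarm (Node A (Node B C)) i) = (i = c)) \<and>
       armcnt (Node (Node A B) C) c \<le> 0 \<and> armcnt (Node A (Node B C)) c \<le> 0 \<and>
       (onarm (Node (Node A B) C) c \<longrightarrow> (\<forall>l r. sub (Node A (Node B C)) c = Node l r \<longrightarrow> onarm (Node A (Node B C)) (c + nodes r + 1)))"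
      by (rule exI[of _ "nodes A"]) auto
    show "\<forall>i. \<not> onarm (Node (Node A B) C) i \<longrightarrow> \<not> onarm (Node A (Node B C)) i \<longrightarrow>
         sub (Node A (Node B C)) i = sub (Node (Node A B) C) i"
    proof (intro allI impI)
      fix i
      assume n1: "\<not> onarm (Node (Node A B) C) i" and n2: "\<not> onarm (Node A (Node B C)) i"
      consider "i < nodes A" | "i = nodes A" | "nodes A < i \<and> i < Suc (nodes A + nodes B)"
        | "i = Suc (nodes A + nodes B)" | "Suc (nodes A + nodes B) < i" by linarith
      then show "sub (Node A (Node B C)) i = sub (Node (Node A B) C) i"
      proof cases
        case 1 then show ?thesis by simp
      next
        case 2 then show ?thesis using n2 by simp
      next
        case 3 then show ?thesis by (auto simp: Suc_diff_Suc)
      next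
        case 4 then show ?thesis using n1 by simp
      next
        case 5
        then have "i - Suc (nodes A) - Suc (nodes B) = i - Suc (Suc (nodes A + nodes B))" by simp
        then show ?thesis using 5 by auto
      qed
    qed
  qed
qed

lemma good_rl: "rot_left t = Some t' \<Longrightarrow> good_step 0 t t'"
proof -
  assume h: "rot_left t = Some t'"
  then obtain A B C where t: "t = Node A (Node B C)" and t': "t' = Node (Node A B) C"
    by (cases t rule: rot_left.cases) auto
  show ?thesis unfolding good_step_def t t'
  proof (intro conjI)
    show "nodes (Node (Node A B) C) = nodes (Node A (Node B C))" by simp
    show "\<exists>c<nodes (Node A (Node B C)).
       (\<forall>i. (onarm (Node A (Node B C)) i \<noteq> onarm (Node (Node A B) C) i) = (i = c)) \<and>
       armcnt (Node A (Node B C)) c \<le> 0 \<and> armcnt (Node (Node A B) C) c \<le> 0 \<and>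
       (onarm (Node A (Node B C)) c \<longrightarrow> (\<forall>l r. sub (Node (Node A B) C) c = Node l r \<longrightarrow> onarm (Node (Node A B) C) (c + nodes r + 1)))"
      by (rule exI[of _ "nodes A"]) auto
    show "\<forall>i. \<not> onarm (Node A (Node B C)) i \<longrightarrow> \<not> onarm (Node (Node A B) C) i \<longrightarrow>
         sub (Node (Node A B) C) i = sub (Node A (Node B C)) i"
    proof (intro allI impI)
      fix i
      assume n2: "\<not> onarm (Node A (Node B C)) i" and n1: "\<not> onarm (Node (Node A B) C) i"
      consider "i < nodes A" | "i = nodes A" | "nodes A < i \<and> i < Suc (nodes A + nodes B)"
        | "i = Suc (nodes A + nodes B)" | "Suc (nodes A + nodes B) < i" by linarith
      then show "sub (Node (Node A B) C) i = sub (Node A (Node B C)) i"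
      proof cases
        case 1 then show ?thesis by simp
      next
        case 2 then show ?thesis using n2 by simp
      next
        case 3 then show ?thesis by (auto simp: Suc_diff_Suc)
      next
        case 4 then show ?thesis using n1 by simp
      next
        case 5
        then have "i - Suc (nodes A) - Suc (nodes B) = i - Suc (Suc (nodes A + nodes B))" by simp
        then show ?thesis using 5 by auto
      qed
    qed
  qed
qed

lemma good_mono: "good_step k t t' \<Longrightarrow> k \<le> k' \<Longrightarrow> good_step k' t t'"
  unfolding good_step_def by (meson order_trans)

lemma good_lift: "good_step k r r' \<Longrightarrow> good_step (Suc k) (Node l r) (Node l r')"
proof -
  assume g: "good_step k r r'"
  then have nn: "nodes r' = nodes r" and fr: "\<forall>i. \<not> onarm r i \<longrightarrow> \<not> onarm r' i \<longrightarrow> sub r' i = sub r i"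
    unfolding good_step_def by auto
  from g obtain c where c: "c < nodes r" "\<forall>i. (onarm r i \<noteq> onarm r' i) = (i = c)"
    "armcnt r c \<le> k" "armcnt r' c \<le> k"
    "onarm r c \<longrightarrow> (\<forall>l r. sub r' c = Node l r \<longrightarrow> onarm r' (c + nodes r + 1))"
    unfolding good_step_def by blast
  let ?c = "c + Suc (nodes l)"
  show ?thesis unfolding good_step_def
  proof (intro conjI)
    show "nodes (Node l r') = nodes (Node l r)" using nn by simp
    show "\<exists>c<nodes (Node l r). (\<forall>i. (onarm (Node l r) i \<noteq> onarm (Node l r') i) = (i = c)) \<and>
      armcnt (Node l r) c \<le> Suc k \<and> armcnt (Node l r') c \<le> Suc k \<and>
      (onarm (Node l r) c \<longrightarrow> (\<forall>la ra. sub (Node l r') c = Node la ra \<longrightarrow> onarm (Node l r') (c + nodes ra + 1)))"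
    proof (rule exI[of _ ?c], intro conjI allI impI)
      show "?c < nodes (Node l r)" using c(1) by simp
      fix i
      show "(onarm (Node l r) i \<noteq> onarm (Node l r') i) = (i = ?c)"
        using c(2)[rule_format, of "i - Suc (nodes l)"] by auto
    next
      show "armcnt (Node l r) ?c \<le> Suc k" using c(3) by simp
      show "armcnt (Node l r') ?c \<le> Suc k" using c(4) by simp
    next
      fix la ra
      assume "onarm (Node l r) ?c" "sub (Node l r') ?c = Node la ra"
      then have "onarm r c" "sub r' c = Node la ra" by auto
      then have "onarm r' (c + nodes ra + 1)" using c(5) by blast
      then show "onarm (Node l r') (?c + nodes ra + 1)" by simp
    qed
    show "\<forall>i. \<not> onarm (Node l r) i \<longrightarrow> \<not> onarm (Node l r') i \<longrightarrow> sub (Node l r') i = sub (Node l r) i"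
      using fr by auto
  qed
qed

lemma good_at_arm: "at_arm k f t = Some t' \<Longrightarrow> (\<And>t t'. f t = Some t' \<Longrightarrow> good_step 0 t t') \<Longrightarrow> good_step k t t'"
proof (induction k arbitrary: t t')
  case 0
  then show ?case by simp
next
  case (Suc k)
  then obtain l r r' where "t = Node l r" "at_arm k f r = Some r'" "t' = Node l r'"
    by (cases t) auto
  then show ?case using Suc good_lift by blast
qed

lemma rra_good: "rra_step m t t' \<Longrightarrow> good_step m t t'"
  unfolding rra_step_def using good_at_arm good_rr good_rl good_mono by blast

fun comb :: "nat \<Rightarrow> tree" where
  "comb 0 = Leaf"
| "comb (Suc k) = Node Leaf (comb k)"

lemma nodes_comb[simp]: "nodes (comb k) = k"
  by (induction k) auto

lemma rr_rl: "rot_right t = Some t' \<longleftrightarrow> rot_left t' = Some t"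
  by (cases t rule: rot_right.cases; cases t' rule: rot_left.cases) auto

lemma at_arm_rr_rl: "at_arm k rot_right t = Some t' \<longleftrightarrow> at_arm k rot_left t' = Some t"
proof (induction k arbitrary: t t')
  case 0
  then show ?case using rr_rl by simp
next
  case (Suc k)
  show ?case
  proof
    assume "at_arm (Suc k) rot_right t = Some t'"
    then obtain l r r' where "t = Node l r" "at_arm k rot_right r = Some r'" "t' = Node l r'"
      by (cases t) auto
    then show "at_arm (Suc k) rot_left t' = Some t" using Suc by simp
  next
    assume "at_arm (Suc k) rot_left t' = Some t"
    then obtain l r r' where "t' = Node l r'" "at_arm k rot_left r' = Some r" "t = Node l r"
      by (cases t') auto
    then show "at_arm (Suc k) rot_right t = Some t'" using Suc by simp
  qed
qed

lemma rra_sym: "rra_step m t t' \<Longrightarrow> rra_step m t' t"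
  unfolding rra_step_def using at_arm_rr_rl by blast

lemma rra_mono: "rra_step m t t' \<Longrightarrow> m \<le> m' \<Longrightarrow> rra_step m' t t'"
  unfolding rra_step_def by (meson order_trans)

lemma sim: "at_arm k f t = Some t' \<Longrightarrow> f = rot_right \<or> f = rot_left \<Longrightarrow> (rra_step 1)\<^sup>*\<^sup>* t t'"
proof (induction k arbitrary: t t' rule: less_induct)
  case (less k)
  show ?case
  proof (cases "k \<le> 1")
    case True
    then have "rra_step 1 t t'" unfolding rra_step_def using less.prems by blast
    then show ?thesis by simp
  next
    case False
    define k' where "k' = k - 2"
    have k: "k = Suc (Suc k')" using False unfolding k'_def by simp
    from less.prems(1) obtain l0 r where t: "t = Node l0 r" and r: "at_arm (Suc k') f r \<noteq> None"
      and t': "t' = Node l0 (the (at_arm (Suc k') f r))"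
      unfolding k by (cases t) auto
    from r obtain l1 r1 r1' where r1: "r = Node l1 r1" "at_arm k' f r1 = Some r1'"
      by (cases r) auto
    have t'': "t' = Node l0 (Node l1 r1')" using t' r1 by simp
    let ?u = "Node (Node l0 l1) r1"
    let ?u' = "Node (Node l0 l1) r1'"
    have s1: "rra_step 1 t ?u" unfolding rra_step_def t r1
      by (rule exI[of _ 0]) simp
    have "at_arm (Suc k') f ?u = Some ?u'" using r1 by simp
    then have s2: "(rra_step 1)\<^sup>*\<^sup>* ?u ?u'" using less.IH[of "Suc k'"] less.prems(2) k by blast
    have s3: "rra_step 1 ?u' t'" unfolding rra_step_def t''
      by (rule exI[of _ 0]) simp
    have "(rra_step 1)\<^sup>*\<^sup>* t ?u'" using s1 s2 by (rule converse_rtranclp_into_rtranclp)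
    then show ?thesis using s3 by (rule rtranclp.rtrancl_into_rtrancl)
  qed
qed

definition astep :: "tree \<Rightarrow> tree \<Rightarrow> bool" where
  "astep t t' \<longleftrightarrow> (\<exists>k. at_arm k rot_right t = Some t')"

lemma astep_lift: "astep\<^sup>*\<^sup>* r r' \<Longrightarrow> astep\<^sup>*\<^sup>* (Node l r) (Node l r')"
proof (induction rule: rtranclp_induct)
  case base
  then show ?case by simp
next
  case (step y z)
  then obtain k where "at_arm k rot_right y = Some z" unfolding astep_def by blast
  then have "at_arm (Suc k) rot_right (Node l y) = Some (Node l z)" by simp
  then have "astep (Node l y) (Node l z)" unfolding astep_def by blast
  then show ?case using step.IH by simp
qed

lemma to_comb_aux: "astep\<^sup>*\<^sup>* (Node l (comb j)) (comb (nodes l + j + 1))"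
proof (induction l arbitrary: j)
  case Leaf
  then show ?case by simp
next
  case (Node A B)
  have "astep (Node (Node A B) (comb j)) (Node A (Node B (comb j)))"
    unfolding astep_def by (rule exI[of _ 0]) simp
  moreover have "astep\<^sup>*\<^sup>* (Node A (Node B (comb j))) (Node A (comb (nodes B + j + 1)))"
    using astep_lift Node.IH(2) by blast
  moreover have "astep\<^sup>*\<^sup>* (Node A (comb (nodes B + j + 1))) (comb (nodes A + (nodes B + j + 1) + 1))"
    using Node.IH(1) by blast
  ultimately show ?case by (simp add: algebra_simps)
qed

lemma to_comb: "astep\<^sup>*\<^sup>* t (comb (nodes t))"
proof (induction t)
  case Leaf
  then show ?case by simp
next
  case (Node l r)
  have "astep\<^sup>*\<^sup>* (Node l r) (Node l (comb (nodes r)))" using astep_lift Node.IH(2) by blast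
  moreover have "astep\<^sup>*\<^sup>* (Node l (comb (nodes r))) (comb (nodes l + nodes r + 1))"
    using to_comb_aux by blast
  ultimately show ?case by simp
qed

lemma astep_rra: "astep\<^sup>*\<^sup>* t t' \<Longrightarrow> 1 \<le> m \<Longrightarrow> (rra_step m)\<^sup>*\<^sup>* t t'"
proof (induction rule: rtranclp_induct)
  case base
  then show ?case by simp
next
  case (step y z)
  then obtain k where "at_arm k rot_right y = Some z" unfolding astep_def by blast
  then have "(rra_step 1)\<^sup>*\<^sup>* y z" using sim by blast
  then have "(rra_step m)\<^sup>*\<^sup>* y z"
    by (rule rtranclp_mono[THEN predicate2D, rotated]) (use rra_mono step.prems in blast)
  then show ?case using step.IH step.prems by simp
qed

lemma sym_rtrancl: "(rra_step m)\<^sup>*\<^sup>* t t' \<Longrightarrow> (rra_step m)\<^sup>*\<^sup>* t' t"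
proof (induction rule: rtranclp_induct)
  case base
  then show ?case by simp
next
  case (step y z)
  then show ?case using rra_sym by (meson converse_rtranclp_into_rtranclp)
qed

lemma connected: "1 \<le> m \<Longrightarrow> nodes t = nodes t' \<Longrightarrow> rra_defined m t t'"
proof -
  assume m: "1 \<le> m" and n: "nodes t = nodes t'"
  have a: "(rra_step m)\<^sup>*\<^sup>* t (comb (nodes t))" using to_comb astep_rra m by blast
  have b: "(rra_step m)\<^sup>*\<^sup>* (comb (nodes t)) t'" using to_comb[of t'] astep_rra m sym_rtrancl n by metis
  show ?thesis unfolding rra_defined_def using a b rtranclp_imp_relpowp by (metis rtranclp_trans)
qed

definition tA :: "nat \<Rightarrow> tree" where "tA n = Node (comb (n - 1)) Leaf"
definition tB :: "nat \<Rightarrow> tree" where "tB n = Node (Node (comb (n - 2)) Leaf) Leaf"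

lemma onarm_comb: "onarm (comb k) x = (x < k)"
proof (induction k arbitrary: x)
  case 0
  then show ?case by simp
next
  case (Suc k)
  have "onarm (comb (Suc k)) x = (x = 0 \<or> (0 < x \<and> x - 1 < k))" using Suc.IH by simp
  then show ?case by linarith
qed

lemma sub_comb: "x < k \<Longrightarrow> sub (comb k) x = comb (k - x)"
proof (induction k arbitrary: x)
  case 0
  then show ?case by simp
next
  case (Suc k)
  show ?case
  proof (cases x)
    case 0
    then show ?thesis by simp
  next
    case (Suc x')
    then have "x' < k" using Suc.prems by simp
    then show ?thesis using Suc.IH[of x'] \<open>x = Suc x'\<close> by simp
  qed
qed

lemma tA_facts: "x \<le> n - 2 \<Longrightarrow> n \<ge> 3 \<Longrightarrow> \<not> onarm (tA n) x \<and> sub (tA n) x = Node Leaf (comb (n - 2 - x))"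
proof -
  assume a: "x \<le> n - 2" "n \<ge> 3"
  then have e: "n - 1 - x = Suc (n - 2 - x)" by simp
  have lt: "x < n - 1" using a by simp
  have "\<not> onarm (Node (comb (n - 1)) Leaf) x" using lt by simp
  moreover have "sub (Node (comb (n - 1)) Leaf) x = Node Leaf (comb (n - 2 - x))"
    using lt sub_comb[OF lt] e by simp
  ultimately show ?thesis unfolding tA_def by simp
qed

lemma tB_facts1: "x \<le> n - 3 \<Longrightarrow> n \<ge> 3 \<Longrightarrow> \<not> onarm (tB n) x \<and> sub (tB n) x = Node Leaf (comb (n - 3 - x))"
proof -
  assume a: "x \<le> n - 3" "n \<ge> 3"
  then have e: "n - 2 - x = Suc (n - 3 - x)" by simp
  have lt: "x < n - 2" using a by simp
  have "\<not> onarm (Node (Node (comb (n - 2)) Leaf) Leaf) x" using lt by simp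
  moreover have "sub (Node (Node (comb (n - 2)) Leaf) Leaf) x = Node Leaf (comb (n - 3 - x))"
    using lt sub_comb[OF lt] e by simp
  ultimately show ?thesis unfolding tB_def by simp
qed

lemma tB_facts2: "n \<ge> 3 \<Longrightarrow> \<not> onarm (tB n) (n - 2) \<and> sub (tB n) (n - 2) = Node (comb (n - 2)) Leaf"
  unfolding tB_def by simp

lemma nodes_T: "n \<ge> 3 \<Longrightarrow> nodes (tA n) = n \<and> nodes (tB n) = n"
  unfolding tA_def tB_def by simp

lemma parity: "g 0 = False \<Longrightarrow> g i = odd (card {d. d < i \<and> g d \<noteq> g (Suc d)})"
proof (induction i)
  case 0
  then show ?case by simp
next
  case (Suc i)
  show ?case
  proof (cases "g i \<noteq> g (Suc i)")
    case True
    then have "{d. d < Suc i \<and> g d \<noteq> g (Suc d)} = insert i {d. d < i \<and> g d \<noteq> g (Suc d)}" by auto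
    then show ?thesis using Suc True by simp
  next
    case False
    then have "{d. d < Suc i \<and> g d \<noteq> g (Suc d)} = {d. d < i \<and> g d \<noteq> g (Suc d)}"
      using less_Suc_eq by auto
    then show ?thesis using Suc False by simp
  qed
qed

lemma sum_24: "(\<Sum>x<N. (if P x then 2 else 4::nat)) + 2 * card {x. x < N \<and> P x} = 4 * N"
proof (induction N)
  case 0
  then show ?case by simp
next
  case (Suc N)
  show ?case
  proof (cases "P N")
    case True
    then have "{x. x < Suc N \<and> P x} = insert N {x. x < N \<and> P x}" by auto
    then show ?thesis using Suc True by simp
  next
    case False
    then have "{x. x < Suc N \<and> P x} = {x. x < N \<and> P x}" using less_Suc_eq by auto
    then show ?thesis using Suc False by simp
  qed
qed

locale pathctx =
  fixes p :: "nat \<Rightarrow> tree" and J m n :: nat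
  assumes stp: "\<And>i. i < J \<Longrightarrow> good_step m (p i) (p (Suc i))"
    and start: "p 0 = tA n" and fin: "p J = tB n" and n3: "n \<ge> 3"
begin

definition chg :: "nat \<Rightarrow> nat \<Rightarrow> bool" where
  "chg x i \<longleftrightarrow> onarm (p i) x \<noteq> onarm (p (Suc i)) x"

definition cnt :: "nat \<Rightarrow> nat" where
  "cnt x = card {i. i < J \<and> chg x i}"

definition iv :: "nat \<Rightarrow> nat \<Rightarrow> nat \<Rightarrow> bool" where
  "iv x a b \<longleftrightarrow> 0 < a \<and> a \<le> b \<and> b < J \<and> (\<forall>i\<le>J. onarm (p i) x \<longleftrightarrow> a \<le> i \<and> i \<le> b)"

lemma nodes_p: "i \<le> J \<Longrightarrow> nodes (p i) = n"
proof (induction i)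
  case 0
  then show ?case using start nodes_T n3 by simp
next
  case (Suc i)
  then show ?case using stp[of i] unfolding good_step_def by simp
qed

lemma uniq: "i < J \<Longrightarrow> \<exists>c<n. \<forall>x. chg x i \<longleftrightarrow> x = c"
  using stp[of i] nodes_p[of i] unfolding good_step_def chg_def by auto

lemma uniq2: "i < J \<Longrightarrow> chg x i \<Longrightarrow> x \<noteq> y \<Longrightarrow> \<not> chg y i"
proof -
  assume a: "i < J" "chg x i" "x \<noteq> y"
  obtain c where c: "\<forall>x. chg x i \<longleftrightarrow> x = c" using uniq[OF a(1)] by blast
  show ?thesis using c a(2,3) by simp
qed

lemma level: "i < J \<Longrightarrow> chg x i \<Longrightarrow> armcnt (p i) x \<le> m \<and> armcnt (p (Suc i)) x \<le> m"
proof -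
  assume a: "i < J" "chg x i"
  obtain c where c: "\<forall>j. (onarm (p i) j \<noteq> onarm (p (Suc i)) j) = (j = c)"
    "armcnt (p i) c \<le> m" "armcnt (p (Suc i)) c \<le> m"
    using stp[OF a(1)] unfolding good_step_def by blast
  have "x = c" using c(1) a(2) unfolding chg_def by blast
  then show ?thesis using c by simp
qed

lemma leaving: "i < J \<Longrightarrow> chg x i \<Longrightarrow> onarm (p i) x \<Longrightarrow> sub (p (Suc i)) x = Node l r
   \<Longrightarrow> onarm (p (Suc i)) (x + nodes r + 1)"
proof -
  assume a: "i < J" "chg x i" "onarm (p i) x" "sub (p (Suc i)) x = Node l r"
  obtain c where c: "\<forall>j. (onarm (p i) j \<noteq> onarm (p (Suc i)) j) = (j = c)"
    "onarm (p i) c \<longrightarrow> (\<forall>l r. sub (p (Suc i)) c = Node l r \<longrightarrow> onarm (p (Suc i)) (c + nodes r + 1))"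
    using stp[OF a(1)] unfolding good_step_def by blast
  have "x = c" using c(1) a(2) unfolding chg_def by blast
  then show ?thesis using c(2) a(3,4) by blast
qed

lemma frozen1: "i < J \<Longrightarrow> \<not> onarm (p i) x \<Longrightarrow> \<not> onarm (p (Suc i)) x \<Longrightarrow> sub (p (Suc i)) x = sub (p i) x"
  using stp[of i] unfolding good_step_def by blast

lemma frozen: "u \<le> v \<Longrightarrow> v \<le> J \<Longrightarrow> (\<forall>i. u \<le> i \<and> i \<le> v \<longrightarrow> \<not> onarm (p i) x) \<Longrightarrow> sub (p v) x = sub (p u) x"
proof (induction v)
  case 0
  then show ?case by simp
next
  case (Suc v)
  show ?case
  proof (cases "u = Suc v")
    case True
    then show ?thesis by simp
  next
    case False
    then have "u \<le> v" using Suc.prems by simp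
    then have "sub (p v) x = sub (p u) x" using Suc by simp
    moreover have "sub (p (Suc v)) x = sub (p v) x"
      using frozen1[of v x] Suc.prems \<open>u \<le> v\<close> by simp
    ultimately show ?thesis by simp
  qed
qed

lemma J_sum: "J = (\<Sum>x<n. cnt x)"
proof -
  have one: "(\<Sum>x<n. (if chg x i then 1 else 0::nat)) = 1" if iJ: "i < J" for i
  proof -
    obtain c where c: "c < n" "\<forall>x. chg x i \<longleftrightarrow> x = c" using uniq[OF iJ] by blast
    have "(\<Sum>x<n. (if chg x i then 1 else 0::nat)) = (\<Sum>x<n. (if x = c then 1 else 0))"
      using c(2) by simp
    also have "\<dots> = 1" using c(1) by simp
    finally show ?thesis .
  qed
  have "J = (\<Sum>i<J. (\<Sum>x<n. (if chg x i then 1 else 0::nat)))" using one by simp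
  also have "\<dots> = (\<Sum>x<n. (\<Sum>i<J. (if chg x i then 1 else 0::nat)))" by (rule sum.swap)
  also have "\<dots> = (\<Sum>x<n. cnt x)"
  proof (rule sum.cong)
    fix x
    have "(\<Sum>i<J. (if chg x i then 1 else 0::nat)) = card ({..<J} \<inter> Collect (chg x))"
      by (simp add: sum.If_cases)
    also have "{..<J} \<inter> Collect (chg x) = {i. i < J \<and> chg x i}" by auto
    finally show "(\<Sum>i<J. (if chg x i then 1 else 0::nat)) = cnt x" unfolding cnt_def .
  qed simp
  finally show ?thesis .
qed

lemma nonarm_ends: "x \<le> n - 2 \<Longrightarrow> \<not> onarm (p 0) x \<and> \<not> onarm (p J) x"
proof -
  assume x: "x \<le> n - 2"
  have "\<not> onarm (p 0) x" using tA_facts[OF x n3] start by simp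
  moreover have "\<not> onarm (p J) x"
  proof (cases "x = n - 2")
    case True
    then show ?thesis using tB_facts2[OF n3] fin by simp
  next
    case False
    then have "x \<le> n - 3" using x by simp
    then show ?thesis using tB_facts1[OF _ n3] fin by simp
  qed
  ultimately show ?thesis by simp
qed

lemma par: "\<not> onarm (p 0) x \<Longrightarrow> i \<le> J \<Longrightarrow> onarm (p i) x = odd (card {d. d < J \<and> chg x d \<and> d < i})"
proof -
  assume a: "\<not> onarm (p 0) x" "i \<le> J"
  have "onarm (p i) x = odd (card {d. d < i \<and> onarm (p d) x \<noteq> onarm (p (Suc d)) x})"
    using parity[of "\<lambda>j. onarm (p j) x" i] a(1) by simp
  also have "{d. d < i \<and> onarm (p d) x \<noteq> onarm (p (Suc d)) x} = {d. d < J \<and> chg x d \<and> d < i}"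
    using a(2) unfolding chg_def by auto
  finally show ?thesis .
qed

lemma cnt_even: "x \<le> n - 2 \<Longrightarrow> even (cnt x)"
proof -
  assume x: "x \<le> n - 2"
  have "{d. d < J \<and> chg x d \<and> d < J} = {i. i < J \<and> chg x i}" by auto
  then show ?thesis using par[of x J] nonarm_ends[OF x] unfolding cnt_def by simp
qed

lemma cnt_nz: "x \<le> n - 2 \<Longrightarrow> cnt x \<noteq> 0"
proof
  assume x: "x \<le> n - 2" and c: "cnt x = 0"
  have finD: "finite {i. i < J \<and> chg x i}" by simp
  have "\<forall>i. 0 \<le> i \<and> i \<le> J \<longrightarrow> \<not> onarm (p i) x"
  proof (intro allI impI)
    fix i assume iJ: "0 \<le> i \<and> i \<le> J"
    have "{i. i < J \<and> chg x i} = {}" using c finD unfolding cnt_def by simp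
    then have e: "{d. d < J \<and> chg x d \<and> d < i} = {}" by auto
    have "onarm (p i) x = odd (card {d. d < J \<and> chg x d \<and> d < i})"
      using par[of x i] nonarm_ends[OF x] iJ by simp
    then show "\<not> onarm (p i) x" by (simp only: e) simp
  qed
  then have "sub (p J) x = sub (p 0) x" using frozen[of 0 J x] by simp
  then have eq: "sub (tB n) x = Node Leaf (comb (n - 2 - x))" using tA_facts[OF x n3] start fin by simp
  show False
  proof (cases "x = n - 2")
    case True
    then show False using eq tB_facts2[OF n3] n3 by (cases "n - 2") auto
  next
    case False
    then have "x \<le> n - 3" using x by simp
    then have "comb (n - 3 - x) = comb (n - 2 - x)" using eq tB_facts1[OF _ n3] by simp
    then have "nodes (comb (n - 3 - x)) = nodes (comb (n - 2 - x))" by simp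
    then show False using \<open>x \<le> n - 3\<close> n3 by simp
  qed
qed

lemma cnt_2_iv: "x \<le> n - 2 \<Longrightarrow> cnt x = 2 \<Longrightarrow> \<exists>a b. iv x a b"
proof -
  assume x: "x \<le> n - 2" and c: "cnt x = 2"
  then obtain d1 d2 where D: "{i. i < J \<and> chg x i} = {d1, d2}" "d1 \<noteq> d2"
    unfolding cnt_def using card_2_iff by metis
  obtain e1 e2 where E: "{i. i < J \<and> chg x i} = {e1, e2}" "e1 < e2"
  proof (cases "d1 < d2")
    case True
    then show ?thesis using D that by blast
  next
    case False
    then have "d2 < d1" using D(2) by simp
    moreover have "{d1, d2} = {d2, d1}" by (rule insert_commute)
    ultimately show ?thesis using D that[of d2 d1] by simp
  qed
  have e2J: "e2 < J" using E(1) by blast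
  show ?thesis
  proof (rule exI[of _ "Suc e1"], rule exI[of _ e2], unfold iv_def, intro conjI allI impI)
    show "0 < Suc e1" by simp
    show "Suc e1 \<le> e2" using E by simp
    show "e2 < J" by (rule e2J)
    fix i assume i: "i \<le> J"
    have eqS: "{d. d < J \<and> chg x d \<and> d < i} = {d. d \<in> {e1, e2} \<and> d < i}" using E(1) by blast
    have cardc: "card {d. d \<in> {e1, e2} \<and> d < i} = (if i \<le> e1 then 0 else if i \<le> e2 then 1 else 2)"
    proof (cases "i \<le> e1")
      case True
      then have "{d. d \<in> {e1, e2} \<and> d < i} = {}" using E(2) by auto
      then show ?thesis using True by simp
    next
      case False
      show ?thesis
      proof (cases "i \<le> e2")
        case True
        then have "{d. d \<in> {e1, e2} \<and> d < i} = {e1}" using False by auto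
        then show ?thesis using True False by simp
      next
        case False2: False
        then have "{d. d \<in> {e1, e2} \<and> d < i} = {e1, e2}" using False by auto
        then show ?thesis using False False2 E(2) by simp
      qed
    qed
    have "onarm (p i) x = odd (card {d. d < J \<and> chg x d \<and> d < i})"
      using par[of x i] nonarm_ends[OF x] i by simp
    then show "onarm (p i) x = (Suc e1 \<le> i \<and> i \<le> e2)"
      unfolding eqS cardc by auto
  qed
qed

end

context pathctx
begin

lemma iv_D: "iv x a b \<Longrightarrow> 0 < a \<and> a \<le> b \<and> b < J \<and> (\<forall>i\<le>J. onarm (p i) x \<longleftrightarrow> a \<le> i \<and> i \<le> b)"
  unfolding iv_def by blast

lemma O1: "iv x a b \<Longrightarrow> iv y a' b' \<Longrightarrow> x < y \<Longrightarrow> y \<le> n - 2 \<Longrightarrow> a < a'"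
proof -
  assume ix: "iv x a b" and iy: "iv y a' b'" and xy: "x < y" and yn: "y \<le> n - 2"
  note X = iv_D[OF ix] and Y = iv_D[OF iy]
  have x2: "x \<le> n - 2" using xy yn by simp
  have pre: "\<not> onarm (p i) y" if ia: "i < a" for i
  proof -
    have iJ: "i \<le> J" using ia X by simp
    have nx: "\<forall>j. 0 \<le> j \<and> j \<le> i \<longrightarrow> \<not> onarm (p j) x"
    proof (intro allI impI)
      fix j assume "0 \<le> j \<and> j \<le> i"
      then have "j \<le> J" "\<not> (a \<le> j)" using ia iJ by auto
      then show "\<not> onarm (p j) x" using X by blast
    qed
    then have "sub (p i) x = sub (p 0) x" using frozen[of 0 i x] iJ by simp
    then have s: "sub (p i) x = Node Leaf (comb (n - 2 - x))" using tA_facts[OF x2 n3] start by simp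
    have nxi: "\<not> onarm (p i) x" using nx by simp
    have xl: "x < nodes (p i)" using nodes_p[OF iJ] x2 n3 by simp
    have "y \<le> x + nodes (comb (n - 2 - x))" using yn xy by simp
    then show ?thesis using desc_nonarm[OF nxi xl s xy] by simp
  qed
  have at_a: "\<not> onarm (p a) y"
  proof -
    have Xa: "0 < a" "a \<le> b" "b < J" using X by simp_all
    have a1: "a - 1 < a" "Suc (a - 1) = a" using Xa by auto
    have "a - 1 < J" using Xa by linarith
    moreover have "chg x (a - 1)"
    proof -
      have "\<not> onarm (p (a - 1)) x" using X a1 by auto
      moreover have "onarm (p a) x" using X by auto
      ultimately show ?thesis unfolding chg_def using a1 by simp
    qed
    ultimately have "\<not> chg y (a - 1)" using uniq2 xy by simp
    then show ?thesis using pre[OF a1(1)] a1(2) unfolding chg_def by simp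
  qed
  have "onarm (p a') y" using Y by auto
  then show "a < a'" using pre at_a by (metis nat_neq_iff)
qed

lemma O2: "iv x a b \<Longrightarrow> iv y a' b' \<Longrightarrow> x < y \<Longrightarrow> y \<le> n - 3 \<Longrightarrow> b' < b"
proof -
  assume ix: "iv x a b" and iy: "iv y a' b'" and xy: "x < y" and yn: "y \<le> n - 3"
  note X = iv_D[OF ix] and Y = iv_D[OF iy]
  have x3: "x \<le> n - 3" using xy yn by simp
  have post: "\<not> onarm (p i) y" if ib: "b < i" "i \<le> J" for i
  proof -
    have nx: "\<forall>j. i \<le> j \<and> j \<le> J \<longrightarrow> \<not> onarm (p j) x"
    proof (intro allI impI)
      fix j assume "i \<le> j \<and> j \<le> J"
      then have "j \<le> J" "\<not> (j \<le> b)" using ib by auto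
      then show "\<not> onarm (p j) x" using X by blast
    qed
    then have "sub (p J) x = sub (p i) x" using frozen[of i J x] ib by simp
    then have s: "sub (p i) x = Node Leaf (comb (n - 3 - x))" using tB_facts1[OF x3 n3] fin by simp
    have nxi: "\<not> onarm (p i) x" using nx ib by simp
    have xl: "x < nodes (p i)" using nodes_p[OF ib(2)] x3 n3 by simp
    have "y \<le> x + nodes (comb (n - 3 - x))" using yn xy by simp
    then show ?thesis using desc_nonarm[OF nxi xl s xy] by simp
  qed
  have at_b: "\<not> onarm (p b) y"
  proof -
    have bJ: "b < J" using X by simp
    moreover have "chg x b"
    proof -
      have "onarm (p b) x" using X by auto
      moreover have "\<not> onarm (p (Suc b)) x" using X by auto
      ultimately show ?thesis unfolding chg_def by simp
    qed
    ultimately have "\<not> chg y b" using uniq2 xy by simp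
    moreover have "\<not> onarm (p (Suc b)) y" using post bJ by simp
    ultimately show ?thesis unfolding chg_def by simp
  qed
  have "onarm (p b') y" "b' \<le> J" using Y by auto
  then show "b' < b" using post at_b by (metis nat_neq_iff)
qed

lemma special: "iv s a b \<Longrightarrow> s \<le> n - 3 \<Longrightarrow> onarm (p b) (n - 2)"
proof -
  assume ivs0: "iv s a b" and sn: "s \<le> n - 3"
  note X = iv_D[OF ivs0]
  have bJ: "b < J" using X by simp
  have c: "chg s b"
  proof -
    have "onarm (p b) s" using X by auto
    moreover have "\<not> onarm (p (Suc b)) s" using X by auto
    ultimately show ?thesis unfolding chg_def by simp
  qed
  have nx: "\<forall>j. Suc b \<le> j \<and> j \<le> J \<longrightarrow> \<not> onarm (p j) s"
  proof (intro allI impI)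
    fix j assume "Suc b \<le> j \<and> j \<le> J"
    then have "j \<le> J" "\<not> (j \<le> b)" by auto
    then show "\<not> onarm (p j) s" using X by blast
  qed
  then have "sub (p J) s = sub (p (Suc b)) s" using frozen[of "Suc b" J s] bJ by simp
  then have sb: "sub (p (Suc b)) s = Node Leaf (comb (n - 3 - s))" using tB_facts1[OF sn n3] fin by simp
  have "onarm (p (Suc b)) (s + nodes (comb (n - 3 - s)) + 1)"
    using leaving[OF bJ c _ sb] X by auto
  moreover have e: "s + nodes (comb (n - 3 - s)) + 1 = n - 2" using sn n3 by simp
  ultimately have on: "onarm (p (Suc b)) (n - 2)" by (simp only: e)
  have "s \<noteq> n - 2" using sn n3 by simp
  then have "\<not> chg (n - 2) b" using uniq2[OF bJ c] by simp
  then show ?thesis using on unfolding chg_def by simp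
qed

lemma card_le_armcnt: "Y \<subseteq> {y. y < x \<and> onarm t y} \<Longrightarrow> card Y \<le> armcnt t x"
  unfolding armcnt_card by (rule card_mono) simp_all

lemma bound_S: "card {x. x < n - 1 \<and> cnt x = 2} \<le> m + 1"
proof -
  define S where "S = {x. x < n - 2 \<and> cnt x = 2}"
  have finS: "finite S" unfolding S_def by simp
  have split: "{x. x < n - 1 \<and> cnt x = 2} \<subseteq> S \<union> (if cnt (n - 2) = 2 then {n - 2} else {})"
  proof
    fix x assume "x \<in> {x. x < n - 1 \<and> cnt x = 2}"
    then have x: "x < n - 1" "cnt x = 2" by auto
    show "x \<in> S \<union> (if cnt (n - 2) = 2 then {n - 2} else {})"
    proof (cases "x = n - 2")
      case True
      then show ?thesis using x by simp
    next
      case False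
      then have "x < n - 2" using x n3 by simp
      then show ?thesis using x unfolding S_def by simp
    qed
  qed
  have cs: "card {x. x < n - 1 \<and> cnt x = 2} \<le> card S + (if cnt (n - 2) = 2 then 1 else 0)"
  proof -
    have "card {x. x < n - 1 \<and> cnt x = 2} \<le> card (S \<union> (if cnt (n - 2) = 2 then {n - 2} else {}))"
      using split finS by (intro card_mono) auto
    also have "\<dots> \<le> card S + card (if cnt (n - 2) = 2 then {n - 2} else {})" by (rule card_Un_le)
    finally show ?thesis by (cases "cnt (n - 2) = 2") simp_all
  qed
  show ?thesis
  proof (cases "S = {}")
    case True
    have i1: "(if cnt (n - 2) = 2 then 1 else 0::nat) \<le> 1" by simp
    have "card S = 0" using True by simp
    then have "card {x. x < n - 1 \<and> cnt x = 2} \<le> 1" using cs i1 by linarith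
    then show ?thesis by simp
  next
    case False
    define s where "s = Max S"
    have sS: "s \<in> S" unfolding s_def using finS False by simp
    have smax: "\<And>y. y \<in> S \<Longrightarrow> y \<le> s" unfolding s_def using finS by simp
    have s3: "s \<le> n - 3" "cnt s = 2" using sS unfolding S_def by auto
    have s2: "s \<le> n - 2" using s3(1) by simp
    obtain as bs where ivs: "iv s as bs" using cnt_2_iv[OF s2 s3(2)] by blast
    note X = iv_D[OF ivs]
    have low: "onarm (p bs) y" if yS: "y \<in> S" and ys: "y < s" for y
    proof -
      have y3: "y \<le> n - 2" "cnt y = 2" using yS unfolding S_def by auto
      obtain ay by' where ivy: "iv y ay by'" using cnt_2_iv y3 by blast
      have "ay < as" using O1[OF ivy ivs ys] s3 by simp
      moreover have "bs < by'" using O2[OF ivy ivs ys] s3 by simp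
      ultimately show ?thesis using iv_D[OF ivy] X by auto
    qed
    have cS1: "card (S - {s}) \<le> m"
    proof -
      have "S - {s} \<subseteq> {y. y < s \<and> onarm (p bs) y}" using low smax by fastforce
      then have "card (S - {s}) \<le> armcnt (p bs) s" by (rule card_le_armcnt)
      moreover have "chg s bs"
      proof -
        have "onarm (p bs) s" using X by auto
        moreover have "\<not> onarm (p (Suc bs)) s" using X by auto
        ultimately show ?thesis unfolding chg_def by simp
      qed
      then have "armcnt (p bs) s \<le> m" using level X by blast
      ultimately show ?thesis by simp
    qed
    have cardS: "card S = card (S - {s}) + 1" using sS finS
      by (simp add: card_Diff_singleton) (metis Suc_pred card_gt_0_iff empty_iff)
    show ?thesis
    proof (cases "cnt (n - 2) = 2")
      case False
      then show ?thesis using cs cS1 cardS by simp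
    next
      case True
      obtain a2 b2 where iv2: "iv (n - 2) a2 b2" using cnt_2_iv[of "n - 2"] True by auto
      note Z = iv_D[OF iv2]
      have "onarm (p bs) (n - 2)" using special[OF ivs s3(1)] .
      then have a2bs: "a2 \<le> bs" using Z X by auto
      have allS: "onarm (p a2) y" if yS: "y \<in> S" for y
      proof (cases "y = s")
        case True
        have "as < a2" using O1[OF ivs iv2] s3 n3 by simp
        then show ?thesis using True X a2bs Z by auto
      next
        case False
        then have ys: "y < s" using smax yS by fastforce
        have y3: "y \<le> n - 2" "cnt y = 2" using yS unfolding S_def by auto
        obtain ay by' where ivy: "iv y ay by'" using cnt_2_iv y3 by blast
        have "ay < a2" using O1[OF ivy iv2] yS unfolding S_def by simp
        moreover have "bs < by'" using O2[OF ivy ivs ys] s3 by simp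
        ultimately show ?thesis using iv_D[OF ivy] a2bs Z by auto
      qed
      have "S \<subseteq> {y. y < n - 2 \<and> onarm (p a2) y}" using allS unfolding S_def by auto
      then have "card S \<le> armcnt (p a2) (n - 2)" by (rule card_le_armcnt)
      moreover have "armcnt (p a2) (n - 2) \<le> m"
      proof -
        have a1: "a2 - 1 < J" "Suc (a2 - 1) = a2" using Z by auto
        have "chg (n - 2) (a2 - 1)"
        proof -
          have "\<not> onarm (p (a2 - 1)) (n - 2)" using Z by auto
          moreover have "onarm (p a2) (n - 2)" using Z by auto
          ultimately show ?thesis unfolding chg_def using a1 by simp
        qed
        then show ?thesis using level[OF a1(1)] a1(2) by metis
      qed
      ultimately show ?thesis using cs True by simp
    qed
  qed
qed

lemma J_bound: "J \<ge> 4 * (n - 1) - 2 * (m + 1)"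
proof -
  define A where "A = (\<Sum>x<n - 1. cnt x)"
  define B where "B = (\<Sum>x<n - 1. (if cnt x = 2 then 2 else 4::nat))"
  define C where "C = card {x. x < n - 1 \<and> cnt x = 2}"
  have "(\<Sum>x<n. cnt x) = (\<Sum>x<n - 1. cnt x) + cnt (n - 1)"
    using n3 by (metis Suc_diff_1 less_le_trans sum.lessThan_Suc zero_less_numeral)
  then have "J \<ge> (\<Sum>x<n - 1. cnt x)" using J_sum by simp
  moreover have "(\<Sum>x<n - 1. cnt x) \<ge> (\<Sum>x<n - 1. (if cnt x = 2 then 2 else 4::nat))"
  proof (rule sum_mono)
    fix x assume "x \<in> {..<n - 1}"
    then have x2: "x \<le> n - 2" by simp
    have "even (cnt x)" "cnt x \<noteq> 0" using cnt_even[OF x2] cnt_nz[OF x2] by auto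
    then show "(if cnt x = 2 then 2 else 4) \<le> cnt x" by auto
  qed
  moreover have "(\<Sum>x<n - 1. (if cnt x = 2 then 2 else 4::nat)) + 2 * card {x. x < n - 1 \<and> cnt x = 2} = 4 * (n - 1)"
    by (rule sum_24)
  moreover have "card {x. x < n - 1 \<and> cnt x = 2} \<le> m + 1" by (rule bound_S)
  ultimately have "A \<le> J" "B \<le> A" "B + 2 * C = 4 * (n - 1)" "C \<le> m + 1"
    unfolding A_def B_def C_def by simp_all
  then have "4 * (n - 1) \<le> J + 2 * (m + 1)"
  proof -
    assume h: "A \<le> J" "B \<le> A" "B + 2 * C = 4 * (n - 1)" "C \<le> m + 1"
    have "B \<le> J" using h(1,2) by (rule order_trans[rotated])
    moreover have "2 * C \<le> 2 * (m + 1)" using h(4) by simp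
    ultimately have "B + 2 * C \<le> J + 2 * (m + 1)" by (rule add_mono)
    then show ?thesis using h(3) by simp
  qed
  then show ?thesis by (simp only: le_diff_conv)
qed

end

theorem theorem3p10:
  fixes m n :: nat
  assumes "m \<ge> 1" and "n > m + 4"
  shows "\<exists>T1 T2. nodes T1 = n \<and> nodes T2 = n \<and> rra_defined m T1 T2
           \<and> rra_dist m T1 T2 \<ge> 4 * n - 4 * m - 4"
proof -
  have n3: "n \<ge> 3" using assms by simp
  have nd: "nodes (tA n) = n" "nodes (tB n) = n" using nodes_T[OF n3] by simp_all
  have df: "rra_defined m (tA n) (tB n)" using connected[OF assms(1)] nd by simp
  define j0 where "j0 = rra_dist m (tA n) (tB n)"
  have "(rra_step m ^^ j0) (tA n) (tB n)"
    unfolding j0_def rra_dist_def using df unfolding rra_defined_def by (rule LeastI_ex)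
  then obtain p where p: "p 0 = tA n" "p j0 = tB n" "\<forall>i<j0. rra_step m (p i) (p (Suc i))"
    using relpowp_fun_conv by metis
  interpret P: pathctx p j0 m n
  proof
    show "\<And>i. i < j0 \<Longrightarrow> good_step m (p i) (p (Suc i))" using p(3) rra_good by blast
  qed (use p n3 in auto)
  have "j0 \<ge> 4 * (n - 1) - 2 * (m + 1)" by (rule P.J_bound)
  moreover have "4 * (n - 1) - 2 * (m + 1) \<ge> 4 * n - 4 * m - 4" using assms by arith
  ultimately have "rra_dist m (tA n) (tB n) \<ge> 4 * n - 4 * m - 4" unfolding j0_def by linarith
  then show ?thesis using nd df by blast
qed

end
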